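(* Let $m\ge 2$, $n\ge 3$, let $\mathcal{C}^3_{m,n}=(V_1,V_2,E)$, and let $e\in E$ be a hyperedge containing exactly one vertex of $V_1$ and two vertices of $V_2$. Then the Seidel spectrum of $\mathcal{C}^3_{m,n}-e$ consists of the eigenvalue $2n-1$ with multiplicity $m-2$, the eigenvalue $2m-1$ with multiplicity $n-3$, and the five roots $\rho_1,\dots,\rho_5$ of $\xi_1(\rho)=0$, where \begin{align*} \xi_1(\rho)={}&-\rho^5+(-5+7m+5n-4mn)\rho^4\\ &+(46+4m-18m^2+4n-22mn+2m^2n+4m^3n-8n^2-6mn^2+4m^2n^2+4mn^3)\rho^3\\ &+(286-234m-46m^2+36m^3-206n+62mn-10m^2n+52m^3n-16m^4n+8n^2-10mn^2\\ &\quad+64m^2n^2-24m^3n^2+4n^3+40mn^3-24m^2n^3-8mn^4)\rho^2\\ &+(83+76m-366m^2+248m^3-40m^4-228n-90mn+238m^2n+20m^3n-88m^4n+16m^5n\\ &\quad-40n^2+246mn^2+132m^2n^2-184m^3n^2+48m^4n^2+40n^3-28mn^3-160m^2n^3\\ &\quad+48m^3n^3-16mn^4+32m^2n^4)\rho\\ &+(-921+2387m-2322m^2+1012m^3-168m^4+873n-2250mn+1994m^2n-732m^3n\\ &\quad+72m^4n+16m^5n-408n^2+1274mn^2-680m^2n^2-160m^3n^2+160m^4n^2-32m^5n^2\\ &\quad+84n^3-368mn^3+40m^2n^3+160m^3n^3-32m^4n^3+24mn^4+32m^2n^4-32m^3n^4). \end{align*}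
   Context: For a hypergraph $\mathcal{H}$ and distinct vertices $i,j$, the co-degree $c_{ij}$ is the number of hyperedges containing both $i$ and $j$. The Seidel matrix $\mathcal{S}(\mathcal{H})$ has zero diagonal and $(i,j)$-entry $1-2c_{ij}$ for $i\neq j$; its eigenvalues (with multiplicity) form the Seidel spectrum of $\mathcal{H}$. The complete $3$-uniform bipartite hypergraph $\mathcal{C}^3_{m,n}=(V_1,V_2,E)$ has vertex set $V_1\sqcup V_2$, $|V_1|=m$, $|V_2|=n$, and $E$ = all $3$-subsets meeting both $V_1$ and $V_2$. For a hyperedge $e$, $\mathcal{H}-e$ denotes the hypergraph with the same vertex set and hyperedge set $E\setminus\{e\}$. *)

theory Defs
  imports "Jordan_Normal_Form.Char_Poly"
begin

text \<open>A hypergraph on the vertex set {0..<N} is given by its set of hyperedges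
  (each hyperedge a set of vertices).\<close>

definition codegree :: "nat set set \<Rightarrow> nat \<Rightarrow> nat \<Rightarrow> nat" where
  "codegree E i j = card {e \<in> E. i \<in> e \<and> j \<in> e}"

definition seidel_matrix :: "nat \<Rightarrow> nat set set \<Rightarrow> real mat" where
  "seidel_matrix N E = mat N N (\<lambda>(i, j). if i = j then 0 else 1 - 2 * real (codegree E i j))"

definition complete_bip3_edges :: "nat set \<Rightarrow> nat set \<Rightarrow> nat set set" where
  "complete_bip3_edges V1 V2 =
     {e. e \<subseteq> V1 \<union> V2 \<and> card e = 3 \<and> e \<inter> V1 \<noteq> {} \<and> e \<inter> V2 \<noteq> {}}"

definition xi1 :: "real \<Rightarrow> real \<Rightarrow> real poly" where
  "xi1 m n = [:
     -921+2387*m-2322*m^2+1012*m^3-168*m^4+873*n-2250*m*n+1994*m^2*n-732*m^3*n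
      +72*m^4*n+16*m^5*n-408*n^2+1274*m*n^2-680*m^2*n^2-160*m^3*n^2+160*m^4*n^2-32*m^5*n^2
      +84*n^3-368*m*n^3+40*m^2*n^3+160*m^3*n^3-32*m^4*n^3+24*m*n^4+32*m^2*n^4-32*m^3*n^4,
     83+76*m-366*m^2+248*m^3-40*m^4-228*n-90*m*n+238*m^2*n+20*m^3*n-88*m^4*n+16*m^5*n
      -40*n^2+246*m*n^2+132*m^2*n^2-184*m^3*n^2+48*m^4*n^2+40*n^3-28*m*n^3-160*m^2*n^3
      +48*m^3*n^3-16*m*n^4+32*m^2*n^4,
     286-234*m-46*m^2+36*m^3-206*n+62*m*n-10*m^2*n+52*m^3*n-16*m^4*n+8*n^2-10*m*n^2
      +64*m^2*n^2-24*m^3*n^2+4*n^3+40*m*n^3-24*m^2*n^3-8*m*n^4,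
     46+4*m-18*m^2+4*n-22*m*n+2*m^2*n+4*m^3*n-8*n^2-6*m*n^2+4*m^2*n^2+4*m*n^3,
     -5+7*m+5*n-4*m*n,
     -1 :]"

end

theory Submission
  imports Defs
begin


lemma det_mat_Suc: "det (mat (Suc n) (Suc n) f) = (\<Sum>j<Suc n. (-1)^j * f (0,j) * det (mat n n (\<lambda>(i,l). f (Suc i, if l < j then l else Suc l))))"
proof -
  have "det (mat (Suc n) (Suc n) f) = (\<Sum>j<Suc n. mat (Suc n) (Suc n) f $$ (0,j) * cofactor (mat (Suc n) (Suc n) f) 0 j)"
    by (rule laplace_expansion_row) auto
  also have "\<dots> = (\<Sum>j<Suc n. (-1)^j * f (0,j) * det (mat n n (\<lambda>(i,l). f (Suc i, if l < j then l else Suc l))))"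
  proof (rule sum.cong[OF refl])
    fix j assume j: "j \<in> {..<Suc n}"
    have "mat_delete (mat (Suc n) (Suc n) f) 0 j = mat n n (\<lambda>(i,l). f (Suc i, if l < j then l else Suc l))"
      unfolding mat_delete_def using j by (intro eq_matI) auto
    then show "mat (Suc n) (Suc n) f $$ (0,j) * cofactor (mat (Suc n) (Suc n) f) 0 j = (-1)^j * f (0,j) * det (mat n n (\<lambda>(i,l). f (Suc i, if l < j then l else Suc l)))"
      unfolding cofactor_def using j by simp
  qed
  finally show ?thesis .
qed

lemma det_mat_0: "det (mat 0 0 f) = 1" by (simp add: det_def')

fun ldel :: "nat \<Rightarrow> 'a list \<Rightarrow> 'a list" where
  "ldel j [] = []"
| "ldel j (x # xs) = (if j = 0 then xs else x # ldel (j - 1) xs)"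

function ldet :: "'a::comm_ring_1 list list \<Rightarrow> 'a" where
  "ldet [] = 1"
| "ldet (r # rs) = sum_list (map (\<lambda>(j,x). (-1)^j * x * ldet (map (ldel j) rs)) (List.enumerate 0 r))"
  by pat_completeness auto
termination by (relation "measure length") auto

lemma length_ldel: "j < length r \<Longrightarrow> length (ldel j r) = length r - 1"
  by (induct r arbitrary: j) auto

lemma ldel_nth: "j < length r \<Longrightarrow> l < length r - 1 \<Longrightarrow> ldel j r ! l = r ! (if l < j then l else Suc l)"
proof (induct r arbitrary: j l)
  case Nil then show ?case by simp
next
  case (Cons x xs)
  show ?case
  proof (cases "j = 0")
    case True then show ?thesis by simp
  next
    case False
    then obtain j' where j: "j = Suc j'" by (cases j) auto
    show ?thesis
    proof (cases l)
      case 0 then show ?thesis using j by simp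
    next
      case (Suc l')
      have "ldel j' xs ! l' = xs ! (if l' < j' then l' else Suc l')"
        using Cons.prems j Suc by (intro Cons.hyps) auto
      then show ?thesis using j Suc by simp
    qed
  qed
qed

lemma ldet_Cons_sum: "ldet (r # rs) = (\<Sum>j<length r. (-1)^j * r!j * ldet (map (ldel j) rs))"
proof -
  have "map (\<lambda>(j,x). (-1)^j * x * ldet (map (ldel j) rs)) (List.enumerate 0 r)
      = map (\<lambda>j. (-1)^j * r!j * ldet (map (ldel j) rs)) [0..<length r]"
    by (rule nth_equalityI) (auto simp: enumerate_eq_zip)
  then show ?thesis
    by (simp add: sum_set_upt_conv_sum_list_nat[symmetric] atLeast0LessThan)
qed

lemma det_ldet: "length L = n \<Longrightarrow> (\<forall>r\<in>set L. length r = n) \<Longrightarrow>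
   det (mat n n (\<lambda>(i,j). L!i!j)) = ldet L"
proof (induction n arbitrary: L)
  case 0 then show ?case by (simp add: det_mat_0)
next
  case (Suc n')
  then obtain r rs where L: "L = r # rs" by (cases L) auto
  have lr: "length r = Suc n'" using Suc L by auto
  have "det (mat (Suc n') (Suc n') (\<lambda>(i,j). L!i!j)) = (\<Sum>j<Suc n'. (-1)^j * r!j * det (mat n' n' (\<lambda>(i,l). rs ! i ! (if l < j then l else Suc l))))"
    unfolding det_mat_Suc L by simp
  also have "\<dots> = (\<Sum>j<length r. (-1)^j * r!j * ldet (map (ldel j) rs))"
    unfolding lr
  proof (rule sum.cong[OF refl])
    fix j assume j: "j \<in> {..<Suc n'}"
    have "mat n' n' (\<lambda>(i,l). rs ! i ! (if l < j then l else Suc l)) = mat n' n' (\<lambda>(i,l). map (ldel j) rs ! i ! l)"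
      using Suc.prems j L by (intro eq_matI) (auto simp: ldel_nth)
    also have "det \<dots> = ldet (map (ldel j) rs)"
      using Suc.prems j L by (intro Suc.IH) (auto simp: length_ldel)
    finally show "(-1)^j * r!j * det (mat n' n' (\<lambda>(i,l). rs ! i ! (if l < j then l else Suc l))) = (-1)^j * r!j * ldet (map (ldel j) rs)" by simp
  qed
  finally show ?case by (simp only: L ldet_Cons_sum)
qed

lemma pow4: "(x::real)^4 = x*x*x*x" by (simp add: eval_nat_numeral)
lemma pow5: "(x::real)^5 = x*x*x*x*x" by (simp add: eval_nat_numeral)
lemma quot_det: fixes k m n :: real
  defines "al \<equiv> 2*n-1" and "be \<equiv> 2*m-1" and "ga \<equiv> 2*m+2*n-5"
  shows "ldet [[k-be+2,0,0,0,0],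
       [0, k-al + al*(m-1), al, 2*ga, ga*(n-2)],
       [0, al*(m-1), k-al+al, 2*(ga-2), ga*(n-2)],
       [0, ga*(m-1), ga-2, k-be+2*(be-1), be*(n-2)],
       [0, ga*(m-1), ga, 2*be, k-be+be*(n-2)]] = - poly (xi1 m n) k"
  unfolding assms
  apply (simp add: xi1_def)
  apply (simp add: algebra_simps power2_eq_square power3_eq_cube pow4 pow5)
  done

lemma sylvester:
  fixes A :: "'a::idom mat"
  assumes A: "A \<in> carrier_mat n k" and B: "B \<in> carrier_mat k n"
  shows "det (1\<^sub>m n + A * B) = det (1\<^sub>m k + B * A)"
proof -
  define X where "X = four_block_mat (1\<^sub>m n) (-A) B (1\<^sub>m k)"
  define L where "L = four_block_mat (1\<^sub>m n) A (0\<^sub>m k n) (1\<^sub>m k)"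
  have X: "X \<in> carrier_mat (n+k) (n+k)" unfolding X_def using A B by auto
  have L: "L \<in> carrier_mat (n+k) (n+k)" unfolding L_def using A B by auto
  have dL: "det L = 1" unfolding L_def
    by (subst det_four_block_mat_lower_left_zero[of _ n _ k]) (use A in auto)
  have "L * X = four_block_mat (1\<^sub>m n * 1\<^sub>m n + A * B) (1\<^sub>m n * (-A) + A * 1\<^sub>m k)
      (0\<^sub>m k n * 1\<^sub>m n + 1\<^sub>m k * B) (0\<^sub>m k n * (-A) + 1\<^sub>m k * 1\<^sub>m k)"
    unfolding L_def X_def by (rule mult_four_block_mat) (use A B in auto)
  also have "\<dots> = four_block_mat (1\<^sub>m n + A * B) (0\<^sub>m n k) B (1\<^sub>m k)"
    using A B by (auto simp: uminus_l_inv_mat)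
  finally have LX: "L * X = four_block_mat (1\<^sub>m n + A * B) (0\<^sub>m n k) B (1\<^sub>m k)" .
  have "X * L = four_block_mat (1\<^sub>m n * 1\<^sub>m n + (-A) * 0\<^sub>m k n) (1\<^sub>m n * A + (-A) * 1\<^sub>m k)
      (B * 1\<^sub>m n + 1\<^sub>m k * 0\<^sub>m k n) (B * A + 1\<^sub>m k * 1\<^sub>m k)"
    unfolding L_def X_def by (rule mult_four_block_mat) (use A B in auto)
  also have "\<dots> = four_block_mat (1\<^sub>m n) (0\<^sub>m n k) B (1\<^sub>m k + B * A)"
  proof -
    have "A + (-A) = 0\<^sub>m n k" using A by (intro eq_matI) auto
    then show ?thesis using A B by (auto simp: comm_add_mat[of "B*A" k k])
  qed
  finally have XL: "X * L = four_block_mat (1\<^sub>m n) (0\<^sub>m n k) B (1\<^sub>m k + B * A)" .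
  have "det (1\<^sub>m n + A * B) = det (L * X)"
    unfolding LX by (subst det_four_block_mat_upper_right_zero[of _ n]) (use A B in auto)
  also have "\<dots> = det X" using det_mult[OF L X] dL by simp
  also have "\<dots> = det (X * L)" using det_mult[OF X L] dL by simp
  also have "\<dots> = det (1\<^sub>m k + B * A)"
    unfolding XL by (subst det_four_block_mat_upper_right_zero[of _ n]) (use A B in auto)
  finally show ?thesis .
qed

lemma mat_mult_mat: "mat nr n f * mat n nc g = mat nr nc (\<lambda>(i,j). \<Sum>l<n. f (i,l) * g (l,j))"
  by (rule eq_matI) (auto simp: scalar_prod_def atLeast0LessThan intro!: sum.cong)

lemma det_diag_mat: "det (mat n n (\<lambda>(i,j). if i = j then d i else 0)) = (\<Prod>i<n. d i)"
proof -
  have "det (mat n n (\<lambda>(i,j). if i = j then d i else 0)) = prod_list (diag_mat (mat n n (\<lambda>(i,j). if i = j then d i else 0)))"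
    by (rule det_upper_triangular) (auto simp: upper_triangular_def)
  also have "\<dots> = prod_list (map d [0..<n])"
    unfolding diag_mat_def by (auto intro!: arg_cong[where f=prod_list])
  also have "\<dots> = (\<Prod>i<n. d i)"
    by (simp add: prod.list_conv_set_nth atLeast0LessThan)
  finally show ?thesis .
qed

lemma less5: "(i::nat) < 5 \<longleftrightarrow> i = 0 \<or> i = 1 \<or> i = 2 \<or> i = 3 \<or> i = 4" by auto

lemma sum5: "(\<Sum>r::nat<5. f r) = f 0 + f 1 + f 2 + f 3 + (f 4 :: 'a::comm_monoid_add)"
  by (simp add: eval_nat_numeral add.assoc)



lemma codeg_full:
  fixes V1 V2 :: "nat set"
  assumes fin: "finite V1" "finite V2" and disj: "V1 \<inter> V2 = {}"
    and i: "i \<in> V1 \<union> V2" and j: "j \<in> V1 \<union> V2" and ij: "i \<noteq> j"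
  shows "card {f \<in> complete_bip3_edges V1 V2. i \<in> f \<and> j \<in> f} =
     (if i \<in> V1 \<and> j \<in> V1 then card V2 else if i \<in> V2 \<and> j \<in> V2 then card V1 else card V1 + card V2 - 2)"
proof -
  define T where "T = {v. v \<in> V1 \<union> V2 \<and> v \<noteq> i \<and> v \<noteq> j \<and> {i,j,v} \<inter> V1 \<noteq> {} \<and> {i,j,v} \<inter> V2 \<noteq> {}}"
  have eq: "{f \<in> complete_bip3_edges V1 V2. i \<in> f \<and> j \<in> f} = (\<lambda>v. {i,j,v}) ` T"
  proof (intro equalityI subsetI)
    fix f assume "f \<in> {f \<in> complete_bip3_edges V1 V2. i \<in> f \<and> j \<in> f}"
    then have f: "f \<subseteq> V1 \<union> V2" "card f = 3" "f \<inter> V1 \<noteq> {}" "f \<inter> V2 \<noteq> {}" "i \<in> f" "j \<in> f"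
      by (auto simp: complete_bip3_edges_def)
    have ff: "finite f" using f(2) by (simp add: card_ge_0_finite)
    have "card (f - {i,j}) = 1" using f ff ij by (simp add: card_Diff_subset)
    then obtain v where v: "f - {i,j} = {v}" by (auto simp: card_Suc_eq)
    then have fv: "f = {i,j,v}" "v \<noteq> i" "v \<noteq> j" using f by auto
    show "f \<in> (\<lambda>v. {i,j,v}) ` T" using fv f unfolding T_def by auto
  next
    fix f assume "f \<in> (\<lambda>v. {i,j,v}) ` T"
    then obtain v where v: "v \<in> T" "f = {i,j,v}" by auto
    then show "f \<in> {f \<in> complete_bip3_edges V1 V2. i \<in> f \<and> j \<in> f}"
      using i j ij unfolding T_def complete_bip3_edges_def by auto
  qed
  have inj: "inj_on (\<lambda>v. {i,j,v}) T" unfolding inj_on_def T_def by blast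
  have cT: "card T = (if i \<in> V1 \<and> j \<in> V1 then card V2 else if i \<in> V2 \<and> j \<in> V2 then card V1 else card V1 + card V2 - 2)"
  proof (cases "i \<in> V1 \<and> j \<in> V1")
    case True
    then have "T = V2" unfolding T_def using disj by blast
    then show ?thesis using True by simp
  next
    case F1: False
    show ?thesis
    proof (cases "i \<in> V2 \<and> j \<in> V2")
      case True
      then have "T = V1" unfolding T_def using disj by blast
      then show ?thesis using True F1 by auto
    next
      case False
      then have "T = (V1 \<union> V2) - {i,j}" unfolding T_def using F1 i j disj by blast
      then have "card T = card (V1 \<union> V2) - 2" using i j ij fin by (simp add: card_Diff_subset)
      then show ?thesis using fin disj by (subst if_not_P[OF F1], subst if_not_P[OF False]) (simp add: card_Un_disjoint)
    qed
  qed
  show ?thesis unfolding eq card_image[OF inj] cT ..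
qed

lemma sum_delta_mult: "(\<Sum>l<(n::nat). (if i = l then c else 0) * f l) = (if i < n then c * f i else (0::'a::semiring_1))"
  by (induct n) (auto simp: less_Suc_eq)

lemma poly_eq_except:
  fixes P Q :: "real poly"
  assumes "\<And>k. k \<notin> F \<Longrightarrow> poly P k = poly Q k" and "finite F"
  shows "P = Q"
proof (rule ccontr)
  assume "P \<noteq> Q"
  then have "P - Q \<noteq> 0" by simp
  then have "finite {x. poly (P - Q) x = 0}" using poly_roots_finite by blast
  moreover have "UNIV - F \<subseteq> {x. poly (P - Q) x = 0}" using assms(1) by auto
  ultimately have "finite (UNIV - F)" by (rule finite_subset[rotated])
  then have "finite (UNIV :: real set)" using assms(2) by (metis Diff_UNIV finite_Diff2)
  then show False using infinite_UNIV_char_0 by blast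
qed



theorem theorem2p6:
  fixes m n :: nat and V1 V2 :: "nat set" and e :: "nat set"
  assumes "m \<ge> 2" and "n \<ge> 3"
    and "V1 \<inter> V2 = {}" and "V1 \<union> V2 = {0..<m+n}"
    and "card V1 = m" and "card V2 = n"
    and "e \<in> complete_bip3_edges V1 V2"
    and "card (e \<inter> V1) = 1" and "card (e \<inter> V2) = 2"
  shows "char_poly (seidel_matrix (m + n) (complete_bip3_edges V1 V2 - {e})) =
           [:-(2 * real n - 1), 1:] ^ (m - 2) * [:-(2 * real m - 1), 1:] ^ (n - 3)
           * (- xi1 (real m) (real n))"
proof -
  note disj = assms(3) and UV = assms(4)
  have fin: "finite V1" "finite V2" using UV by (metis finite_Un finite_atLeastLessThan)+
  have eE: "e \<subseteq> V1 \<union> V2" using assms(7) by (simp add: complete_bip3_edges_def)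
  obtain a where a: "e \<inter> V1 = {a}" using assms(8) by (auto simp: card_Suc_eq)
  obtain b1 b2 where b: "e \<inter> V2 = {b1, b2}" "b1 \<noteq> b2" using assms(9) by (auto simp: card_2_iff)
  have e_eq: "e = {a, b1, b2}" using a b eE by blast
  have aV: "a \<in> V1" "a \<notin> V2" using a disj by auto
  have bV: "b1 \<in> V2" "b2 \<in> V2" "b1 \<notin> V1" "b2 \<notin> V1" using b disj by auto
  have ab: "a \<noteq> b1" "a \<noteq> b2" using aV bV by auto
  define E' where "E' = complete_bip3_edges V1 V2 - {e}"
  define S where "S = seidel_matrix (m + n) E'"
  have S: "S \<in> carrier_mat (m+n) (m+n)" unfolding S_def seidel_matrix_def by simp
  have cd: "real (codegree E' i j) = (if i \<in> V1 \<and> j \<in> V1 then real n else if i \<in> V2 \<and> j \<in> V2 then real m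
      else real m + real n - 2) - (if i \<in> e \<and> j \<in> e then 1 else 0)"
    if ij: "i \<in> V1 \<union> V2" "j \<in> V1 \<union> V2" "i \<noteq> j" for i j
  proof -
    let ?A = "{f \<in> complete_bip3_edges V1 V2. i \<in> f \<and> j \<in> f}"
    have cA: "card ?A = (if i \<in> V1 \<and> j \<in> V1 then n else if i \<in> V2 \<and> j \<in> V2 then m else m + n - 2)"
      using codeg_full[OF fin disj ij] assms(5,6) by simp
    have rA: "real (card ?A) = (if i \<in> V1 \<and> j \<in> V1 then real n else if i \<in> V2 \<and> j \<in> V2 then real m
      else real m + real n - 2)" unfolding cA using assms(1,2) by (auto simp: of_nat_diff)
    have ge1: "card ?A \<ge> 1" unfolding cA using assms(1,2) by auto
    have "{f \<in> E'. i \<in> f \<and> j \<in> f} = ?A - {e}" unfolding E'_def by auto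
    then have "codegree E' i j = card (?A - {e})" unfolding codegree_def by simp
    also have "\<dots> = card ?A - (if i \<in> e \<and> j \<in> e then 1 else 0)"
      using assms(7) by (auto simp: card_Diff_singleton_if)
    finally show ?thesis using rA ge1 by (auto simp: of_nat_diff)
  qed
  define al where "al = 2 * real n - 1"
  define be where "be = 2 * real m - 1"
  define ga where "ga = 2 * real m + 2 * real n - 5"
  define cls where "cls i = (if i = b1 then 0 else if i = b2 then 1 else if i = a then 2 else if i \<in> V1 then 3 else (4::nat))" for i
  have cls5: "cls i < 5" for i unfolding cls_def by auto
  define Ml where "Ml = [[be, be-2, ga-2, ga, be],
                         [be-2, be, ga-2, ga, be],
                         [ga-2, ga-2, al, al, ga],
                         [ga, ga, al, al, ga],
                         [be, be, ga, ga, be]]"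
  define Cl where "Cl = [[1,0,0,0,0],
                         [0,al,al,ga,ga],
                         [0,al,al,ga-2,ga],
                         [0,ga,ga-2,be-1,be],
                         [0,ga,ga,be,be]]"
  define Ut where "Ut = [[1,-1,0,0,0],
                         [0,0,0,1,0],
                         [0,0,1,0,0],
                         [1,1,0,0,0],
                         [0,0,0,0,1::real]]"
  have Rfact: "(\<Sum>r<5. \<Sum>s<5. Ut!r!ci * Cl!r!s * Ut!s!cj) = Ml!ci!cj" if "ci < 5" "cj < 5" for ci cj
    using that unfolding less5 by (elim disjE) (simp_all add: sum5 Ut_def Cl_def Ml_def)
  have Sij: "S $$ (i,j) = (if i = j then 0 else 1 - 2 * real (codegree E' i j))" if "i < m+n" "j < m+n" for i j
    using that unfolding S_def seidel_matrix_def by simp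
  have main: "poly (char_poly S) k = (k - al)^(m-2) * (k - be)^(n-3) * (- poly (xi1 (real m) (real n)) k)"
    if k: "k \<noteq> al" "k \<noteq> be" for k
  proof -
    define p where "p = k - al"
    define q where "q = k - be"
    have pq: "p \<noteq> 0" "q \<noteq> 0" using k unfolding p_def q_def by auto
    define Dl where "Dl = [q,q,p,p,q]"
    define dd where "dd i = Dl!(cls i)" for i
    define u where "u r i = Ut!r!(cls i)" for r i
    define M where "M = - char_matrix S k"
    have M: "M \<in> carrier_mat (m+n) (m+n)" unfolding M_def using S by simp
    have Mij: "M $$ (i,j) = (if i = j then dd i else 0) + Ml!(cls i)!(cls j)" if ij: "i < m+n" "j < m+n" for i j
    proof -
      have iV: "i \<in> V1 \<union> V2" "j \<in> V1 \<union> V2" using ij UV by auto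
      have "M $$ (i,j) = (if i = j then k else 0) - S $$ (i,j)"
        unfolding M_def char_matrix_def using S ij by simp
      also have "\<dots> = (if i = j then dd i else 0) + Ml!(cls i)!(cls j)"
      proof (cases "i = j")
        case True
        then show ?thesis using Sij[OF ij] iV disj aV bV unfolding dd_def Dl_def Ml_def cls_def p_def q_def
          by auto
      next
        case False
        show ?thesis using Sij[OF ij] cd[OF iV False] False iV disj aV bV ab b(2)
          unfolding dd_def Dl_def Ml_def cls_def e_eq al_def be_def ga_def
          by (auto split: if_splits)
      qed
      finally show ?thesis .
    qed
    have ddnz: "dd i \<noteq> 0" for i using pq cls5[of i] unfolding dd_def Dl_def less5 by auto
    define N where "N = m + n"
    define A where "A = mat N 5 (\<lambda>(i,r). u r i / dd i)"
    define B where "B = mat 5 N (\<lambda>(r,j). \<Sum>s<5. Cl!r!s * u s j)"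
    define Dm where "Dm = mat N N (\<lambda>(i,j). if i = j then dd i else 0)"
    define X where "X = mat N N (\<lambda>(i,j). (if i = j then 1 else 0) + (\<Sum>r<5. u r i / dd i * (\<Sum>s<5. Cl!r!s * u s j)))"
    have A: "A \<in> carrier_mat N 5" and B: "B \<in> carrier_mat 5 N" and Dm: "Dm \<in> carrier_mat N N"
      and X: "X \<in> carrier_mat N N" unfolding A_def B_def Dm_def X_def by auto
    have XAB: "X = 1\<^sub>m N + A * B"
      unfolding X_def A_def B_def mat_mult_mat by (rule eq_matI) auto
    have MDX: "M = Dm * X"
    proof (rule eq_matI)
      fix i j assume ij: "i < dim_row (Dm * X)" "j < dim_col (Dm * X)"
      then have ij': "i < m+n" "j < m+n" using Dm X N_def by auto
      have "(Dm * X) $$ (i,j) = dd i * ((if i = j then 1 else 0) + (\<Sum>r<5. u r i / dd i * (\<Sum>s<5. Cl!r!s * u s j)))"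
        using ij' unfolding Dm_def X_def mat_mult_mat N_def by (simp add: sum_delta_mult)
      also have "\<dots> = (if i = j then dd i else 0) + (\<Sum>r<5. \<Sum>s<5. u r i * Cl!r!s * u s j)"
        using ddnz[of i] by (simp add: sum5 field_simps)
      also have "\<dots> = M $$ (i,j)" unfolding Mij[OF ij'] u_def using Rfact[OF cls5 cls5] by simp
      finally show "M $$ (i,j) = (Dm * X) $$ (i,j)" ..
    qed (use M Dm X N_def in auto)
    have detDm: "det Dm = p ^ m * q ^ n"
    proof -
      have "det Dm = (\<Prod>i<N. dd i)" unfolding Dm_def by (rule det_diag_mat)
      also have "\<dots> = (\<Prod>i\<in>V1 \<union> V2. dd i)" using UV N_def by (simp add: atLeast0LessThan)
      also have "\<dots> = (\<Prod>i\<in>V1. dd i) * (\<Prod>i\<in>V2. dd i)" using fin disj by (simp add: prod.union_disjoint)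
      also have "(\<Prod>i\<in>V1. dd i) = (\<Prod>i\<in>V1. p)"
        by (rule prod.cong) (use bV in \<open>auto simp: dd_def Dl_def cls_def\<close>)
      also have "(\<Prod>i\<in>V2. dd i) = (\<Prod>i\<in>V2. q)"
        by (rule prod.cong) (use aV disj in \<open>auto simp: dd_def Dl_def cls_def\<close>)
      finally show ?thesis using assms(5,6) by simp
    qed
    have detM: "det M = p ^ m * q ^ n * det (1\<^sub>m 5 + B * A)"
    proof -
      have "det M = det Dm * det X" unfolding MDX by (rule det_mult[OF Dm X])
      then show ?thesis unfolding detDm XAB sylvester[OF A B] .
    qed
    define cntl where "cntl = [1, 1, 1, real m - 1, real n - 2]"
    have cnt: "real (card {x \<in> {..<N}. cls x = c}) = cntl ! c" if c: "c < 5" for c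
    proof -
      have bN: "a < N" "b1 < N" "b2 < N" using aV bV UV N_def by auto
      have V1N: "V1 \<subseteq> {..<N}" "V2 \<subseteq> {..<N}" using UV N_def by auto
      have c0: "{x \<in> {..<N}. cls x = 0} = {b1}" using bN unfolding cls_def by auto
      have c1: "{x \<in> {..<N}. cls x = 1} = {b2}" using bN b(2) unfolding cls_def by auto
      have c2: "{x \<in> {..<N}. cls x = 2} = {a}" using bN ab unfolding cls_def by auto
      have c3: "{x \<in> {..<N}. cls x = 3} = V1 - {a}" using V1N bV unfolding cls_def by auto
      have c4: "{x \<in> {..<N}. cls x = 4} = V2 - {b1,b2}" using V1N aV bV UV N_def disj unfolding cls_def by auto
      have cV1: "card (V1 - {a}) = m - 1" using aV assms(5) fin by simp
      have cV2: "card (V2 - {b1,b2}) = n - 2" using bV b(2) assms(6) fin by (simp add: card_Diff_subset)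
      from c consider "c = 0" | "c = 1" | "c = 2" | "c = 3" | "c = 4" unfolding less5 by blast
      then show ?thesis
      proof cases
        case 1 then show ?thesis using arg_cong[OF c0, of card] unfolding cntl_def by simp
      next
        case 2 then show ?thesis using arg_cong[OF c1, of card] unfolding cntl_def by simp
      next
        case 3 then show ?thesis using arg_cong[OF c2, of card] unfolding cntl_def by simp
      next
        case 4 then show ?thesis using arg_cong[OF c3, of card] unfolding cntl_def using cV1 assms(1) by (simp add: of_nat_diff)
      next
        case 5 then show ?thesis using arg_cong[OF c4, of card] unfolding cntl_def using cV2 assms(2) by (simp add: of_nat_diff)
      qed
    qed
    define Y where "Y = mat 5 5 (\<lambda>(r,s). (if r = s then 1 else 0) +
        (\<Sum>c<5. cntl!c * ((\<Sum>t<5. Cl!r!t * Ut!t!c) * (Ut!s!c / Dl!c))))"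
    have BA: "1\<^sub>m 5 + B * A = Y"
    proof (rule eq_matI)
      fix r s assume rs: "r < dim_row Y" "s < dim_col Y"
      then have rs': "r < 5" "s < 5" unfolding Y_def by auto
      have "(B * A) $$ (r,s) = (\<Sum>j<N. (\<Sum>t<5. Cl!r!t * u t j) * (u s j / dd j))"
        unfolding B_def A_def mat_mult_mat using rs' by simp
      also have "\<dots> = (\<Sum>j\<in>{..<N}. (\<lambda>c. (\<Sum>t<5. Cl!r!t * Ut!t!c) * (Ut!s!c / Dl!c)) (cls j))"
        unfolding u_def dd_def by simp
      also have "\<dots> = (\<Sum>c\<in>{..<5}. of_nat (card {x \<in> {..<N}. cls x = c}) * ((\<Sum>t<5. Cl!r!t * Ut!t!c) * (Ut!s!c / Dl!c)))"
        by (rule sum_fun_comp) (use cls5 in auto)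
      also have "\<dots> = (\<Sum>c<5. cntl!c * ((\<Sum>t<5. Cl!r!t * Ut!t!c) * (Ut!s!c / Dl!c)))"
        by (rule sum.cong[OF refl], subst cnt) auto
      finally show "(1\<^sub>m 5 + B * A) $$ (r,s) = Y $$ (r,s)" using rs' A B unfolding Y_def by simp
    qed (use A B Y_def in auto)
    define Lv where "Lv = [q,p,p,q,q]"
    define wl where "wl = [2, real m - 1, 1, 2, real n - 2]"
    have Lvnz: "Lv ! l \<noteq> 0" if "l < 5" for l using that pq unfolding less5 Lv_def by auto
    have Z: "(\<Sum>c<5. cntl!c * ((\<Sum>t<5. Cl!r!t * Ut!t!c) * (Ut!l!c / Dl!c))) = Cl!r!l * wl!l / Lv!l"
      if "r < 5" "l < 5" for r l
      using that unfolding less5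
      by (elim disjE) (simp_all add: sum5 Cl_def Ut_def Dl_def Lv_def wl_def cntl_def add_divide_distrib[symmetric])
    define Ql where "Ql = [[k-be+2,0,0,0,0],
       [0, k-al + al*(real m-1), al, 2*ga, ga*(real n-2)],
       [0, al*(real m-1), k-al+al, 2*(ga-2), ga*(real n-2)],
       [0, ga*(real m-1), ga-2, k-be+2*(be-1), be*(real n-2)],
       [0, ga*(real m-1), ga, 2*be, k-be+be*(real n-2)]]"
    have Qrs: "(if r = s then Lv!s else 0) + Cl!r!s * wl!s = Ql!r!s" if "r < 5" "s < 5" for r s
      using that unfolding less5
      by (elim disjE) (simp_all add: Cl_def Lv_def wl_def Ql_def p_def q_def)
    have YL: "Y * mat 5 5 (\<lambda>(i,j). if i = j then Lv!i else 0) = mat 5 5 (\<lambda>(i,j). Ql!i!j)"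
    proof (rule eq_matI)
      fix r s assume rs: "r < dim_row (mat 5 5 (\<lambda>(i,j). Ql!i!j))" "s < dim_col (mat 5 5 (\<lambda>(i,j). Ql!i!j))"
      then have rs': "r < 5" "s < 5" by auto
      have "(Y * mat 5 5 (\<lambda>(i,j). if i = j then Lv!i else 0)) $$ (r,s) =
          (\<Sum>l<5. ((if r = l then 1 else 0) + Cl!r!l * wl!l / Lv!l) * (if l = s then Lv!l else 0))"
        unfolding Y_def mat_mult_mat using rs' Z[OF rs'(1)] by simp
      also have "\<dots> = ((if r = s then 1 else 0) + Cl!r!s * wl!s / Lv!s) * Lv!s"
        using rs'(2) unfolding less5 by (elim disjE) (simp_all add: sum5)
      also have "\<dots> = (if r = s then Lv!s else 0) + Cl!r!s * wl!s"
        using Lvnz[OF rs'(2)] by (simp add: field_simps)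
      also have "\<dots> = Ql!r!s" by (rule Qrs[OF rs'])
      finally show "(Y * mat 5 5 (\<lambda>(i,j). if i = j then Lv!i else 0)) $$ (r,s) = mat 5 5 (\<lambda>(i,j). Ql!i!j) $$ (r,s)"
        using rs' by simp
    qed (auto simp: Y_def)
    have dL: "det (mat 5 5 (\<lambda>(i,j). if i = j then Lv!i else 0)) = q^3 * p^2"
      unfolding det_diag_mat by (simp add: sum5 Lv_def eval_nat_numeral)
    have dQ: "det (mat 5 5 (\<lambda>(i,j). Ql!i!j)) = - poly (xi1 (real m) (real n)) k"
    proof -
      have lQ: "ldet Ql = - poly (xi1 (real m) (real n)) k"
        unfolding Ql_def al_def be_def ga_def by (rule quot_det)
      have "det (mat 5 5 (\<lambda>(i,j). Ql!i!j)) = ldet Ql"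
        by (rule det_ldet) (auto simp: Ql_def)
      then show ?thesis using lQ by simp
    qed
    have "det Y * (q^3 * p^2) = - poly (xi1 (real m) (real n)) k"
      using det_mult[of Y 5 "mat 5 5 (\<lambda>(i,j). if i = j then Lv!i else 0)"] YL dL dQ unfolding Y_def by simp
    then have dY: "det Y = - poly (xi1 (real m) (real n)) k / (q^3 * p^2)"
      using pq by (simp add: field_simps)
    have mm: "p ^ m = p^(m-2) * p^2"
    proof -
      have "m - 2 + 2 = m" using assms(1) by simp
      then show ?thesis by (metis power_add)
    qed
    have nn: "q ^ n = q^(n-3) * q^3"
    proof -
      have "n - 3 + 3 = n" using assms(2) by simp
      then show ?thesis by (metis power_add)
    qed
    have "poly (char_poly S) k = det M" unfolding M_def by (rule char_poly_matrix[OF S])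
    also have "\<dots> = p^(m-2) * q^(n-3) * (- poly (xi1 (real m) (real n)) k)"
      unfolding detM BA dY mm nn using pq by (simp add: field_simps)
    finally show ?thesis unfolding p_def q_def .
  qed
  have "char_poly S = [:-(2 * real n - 1), 1:] ^ (m - 2) * [:-(2 * real m - 1), 1:] ^ (n - 3)
           * (- xi1 (real m) (real n))"
  proof (rule poly_eq_except[of "{al, be}"])
    fix k assume "k \<notin> {al, be}"
    then have "poly (char_poly S) k = (k - al)^(m-2) * (k - be)^(n-3) * (- poly (xi1 (real m) (real n)) k)"
      using main by auto
    then show "poly (char_poly S) k = poly ([:-(2 * real n - 1), 1:] ^ (m - 2) * [:-(2 * real m - 1), 1:] ^ (n - 3)
           * (- xi1 (real m) (real n))) k"
      by (simp add: poly_power al_def be_def algebra_simps)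
  qed simp
  then show ?thesis unfolding S_def E'_def .
qed

end
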